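(* Let $m,n\geq1$. The graph $\Gamma_m^n$ is bipartite with respect to the decomposition of its vertex set into the vertices $e_\lambda$ with $|\lambda|$ even and those with $|\lambda|$ odd. In particular, paths in $\Gamma_m^n$ of even length can only connect weights whose heights have the same parity, and paths of odd length can only connect weights whose heights have different parity.
   Context: A weight of type $(m,n)$ is a word $\lambda=\lambda_1\cdots\lambda_{m+n}$ in $\vee$ ("down") and $\wedge$ ("up") with $m$ letters $\vee$ and $n$ letters $\wedge$; $\Lambda_m^n$ is the set of weights. The height of $\lambda$ is $|\lambda|=\sum_{i:\lambda_i=\vee}\#\{j<i:\lambda_j=\wedge\}$. For $\lambda\in\Lambda_m^n$ let $\underline\lambda$ be the set of "cups" obtained by repeatedly pairing a $\vee$ with a $\wedge$ that are neighbours ($\vee$ on the left), ignoring positions already paired (positions on the line at which nested non-crossing lower semicircles are drawn); mirroring each cup above the line gives the closed circles of the degree-zero arc diagram $e_\lambda$. $\Gamma_m^n$ is the simple undirected graph with vertex set $\{e_\lambda\}_{\lambda\in\Lambda_m^n}$ and an edge between $e_\lambda$ and $e_\mu$ if one of $\lambda,\mu$ is obtained from the other by exchanging the labels at the two endpoints of one cup (i.e. of a $\vee\cdots\wedge$ pair lying on a single circle of $e_\lambda$, resp. $e_\mu$). *)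

theory Defs
  imports Main
begin

datatype letter = Down | Up   (* Down = \<vee>, Up = \<wedge> *)

type_synonym weight = "letter list"

definition weights :: "nat \<Rightarrow> nat \<Rightarrow> weight set" where
  "weights m n = {w. length w = m + n \<and> count_list w Down = m \<and> count_list w Up = n}"

definition height :: "weight \<Rightarrow> nat" where
  "height w = (\<Sum>i\<in>{i. i < length w \<and> w ! i = Down}. card {j. j < i \<and> w ! j = Up})"

(* cups of lambda: (i,j) is a cup iff w_i = Down, w_j = Up, i < j and every position
   strictly between i and j is already paired by a cup lying strictly between i and j,
   i.e. Down and Up become neighbours after ignoring already paired positions. *)
inductive cup :: "weight \<Rightarrow> nat \<Rightarrow> nat \<Rightarrow> bool" for w where
  "\<lbrakk> i < j; j < length w; w ! i = Down; w ! j = Up;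
     \<forall>k. i < k \<and> k < j \<longrightarrow> (\<exists>l. i < l \<and> l < j \<and> (cup w k l \<or> cup w l k)) \<rbrakk>
   \<Longrightarrow> cup w i j"

definition cup_swap :: "weight \<Rightarrow> weight \<Rightarrow> bool" where
  "cup_swap w v \<longleftrightarrow> (\<exists>i j. cup w i j \<and> v = w[i := Up, j := Down])"

(* edge relation of Gamma_m^n (vertices e_lambda identified with weights lambda) *)
definition Gamma_edge :: "nat \<Rightarrow> nat \<Rightarrow> weight \<Rightarrow> weight \<Rightarrow> bool" where
  "Gamma_edge m n w v \<longleftrightarrow> w \<in> weights m n \<and> v \<in> weights m n \<and> (cup_swap w v \<or> cup_swap v w)"

(* a path in Gamma_m^n given by its nonempty vertex list; its length is length ps - 1 *)
definition Gamma_path :: "nat \<Rightarrow> nat \<Rightarrow> weight list \<Rightarrow> bool" where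
  "Gamma_path m n ps \<longleftrightarrow> ps \<noteq> [] \<and> set ps \<subseteq> weights m n \<and>
     (\<forall>k. Suc k < length ps \<longrightarrow> Gamma_edge m n (ps ! k) (ps ! Suc k))"

end

theory Submission
  imports Defs
begin

definition sg :: "weight \<Rightarrow> nat \<Rightarrow> int" where
  "sg w q = (if w ! q = Down then 1 else -1)"

definition S :: "weight \<Rightarrow> nat \<Rightarrow> nat \<Rightarrow> int" where
  "S w a b = sum (sg w) {a..<b}"

lemma S_split: "a \<le> b \<Longrightarrow> b \<le> c \<Longrightarrow> S w a c = S w a b + S w b c"
  unfolding S_def by (simp add: sum.atLeastLessThan_concat)

lemma S_Suc: "a \<le> b \<Longrightarrow> S w a (Suc b) = S w a b + sg w b"
  unfolding S_def by (simp add: sum.atLeastLessThan_Suc)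

lemma S_Suc_left: "a < b \<Longrightarrow> S w a b = sg w a + S w (Suc a) b"
  using S_split[of a "Suc a" b w] by (simp add: S_def)

lemma S_refl[simp]: "S w a a = 0"
  by (simp add: S_def)

lemma cup_letters: "cup w a b \<Longrightarrow> w ! a = Down \<and> w ! b = Up \<and> a < b \<and> b < length w"
  by (erule cup.cases) auto

lemma cup_bal: "cup w i j \<Longrightarrow> S w i (Suc j) = 0"
proof (induction rule: cup.induct)
  case (1 i j)
  note H = "1.IH"
  have A: "i < p \<Longrightarrow> p \<le> j \<Longrightarrow> S w (Suc i) p \<ge> 0" for p
  proof (induction p rule: less_induct)
    case (less p)
    show ?case
    proof (cases "p = Suc i")
      case True then show ?thesis by simp
    next
      case False
      then have p1: "i < p - 1" "p - 1 < j" "Suc i \<le> p - 1" using less.prems by auto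
      have pe: "p = Suc (p - 1)" using p1 by auto
      show ?thesis
      proof (cases "w ! (p - 1) = Down")
        case True
        have "S w (Suc i) p = S w (Suc i) (p - 1) + sg w (p - 1)"
          using S_Suc[OF p1(3), of w] pe by simp
        moreover have "S w (Suc i) (p - 1) \<ge> 0" using less.IH[of "p - 1"] p1 by auto
        ultimately show ?thesis using True by (simp add: sg_def)
      next
        case False
        obtain l where l: "i < l" "l < j" "cup w (p - 1) l \<and> S w (p - 1) (Suc l) = 0 \<or> cup w l (p - 1) \<and> S w l (Suc (p - 1)) = 0"
          using H p1 by blast
        then have c: "cup w l (p - 1)" "S w l p = 0" using False cup_letters pe by metis+
        have lp: "l < p - 1" using cup_letters[OF c(1)] by auto
        have "S w (Suc i) p = S w (Suc i) l + S w l p"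
          using S_split[of "Suc i" l p w] l lp by auto
        moreover have "S w (Suc i) l \<ge> 0" using less.IH[of l] l lp by auto
        ultimately show ?thesis using c by simp
      qed
    qed
  qed
  have B: "j - p = d \<Longrightarrow> i < p \<Longrightarrow> p \<le> j \<Longrightarrow> S w p j \<le> 0" for p d
  proof (induction d arbitrary: p rule: less_induct)
    case (less d)
    show ?case
    proof (cases "p = j")
      case True then show ?thesis by simp
    next
      case False
      then have p1: "i < p" "p < j" using less.prems by auto
      show ?thesis
      proof (cases "w ! p = Down")
        case False
        have "S w p j = sg w p + S w (Suc p) j" using S_Suc_left p1 by blast
        moreover have "S w (Suc p) j \<le> 0" using less.IH[of "j - Suc p" "Suc p"] p1 less.prems by auto
        ultimately show ?thesis using False by (simp add: sg_def)
      next
        case True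
        obtain l where l: "i < l" "l < j" "cup w p l \<and> S w p (Suc l) = 0 \<or> cup w l p \<and> S w l (Suc p) = 0"
          using H p1 by blast
        then have c: "cup w p l" "S w p (Suc l) = 0" using True cup_letters by (metis letter.distinct(1))+
        have lp: "p < l" using cup_letters[OF c(1)] by auto
        have "S w p j = S w p (Suc l) + S w (Suc l) j"
          using S_split[of p "Suc l" j w] l lp by auto
        moreover have "S w (Suc l) j \<le> 0" using less.IH[of "j - Suc l" "Suc l"] l lp less.prems by auto
        ultimately show ?thesis using c by simp
      qed
    qed
  qed
  have "S w (Suc i) j = 0" using A[of j] B[of "Suc i"] "1.hyps"(1) by fastforce
  moreover have "S w i (Suc j) = sg w i + S w (Suc i) j + sg w j"
    using S_Suc_left[of i "Suc j" w] S_Suc[of "Suc i" j w] "1.hyps"(1) by simp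
  ultimately show ?case using "1.hyps"(3,4) by (simp add: sg_def)
qed

lemma S_parity: "a \<le> b \<Longrightarrow> even (S w a b + int (b - a))"
proof (induction b)
  case 0 then show ?case by simp
next
  case (Suc b)
  show ?case
  proof (cases "a = Suc b")
    case True then show ?thesis by simp
  next
    case False
    then have ab: "a \<le> b" using Suc.prems by auto
    have "S w a (Suc b) + int (Suc b - a) = (S w a b + int (b - a)) + (sg w b + 1)"
      using S_Suc[OF ab, of w] ab by simp
    moreover have "even (sg w b + 1)" by (simp add: sg_def)
    ultimately show ?thesis using Suc.IH ab by auto
  qed
qed

lemma cup_odd: "cup w i j \<Longrightarrow> odd (j - i)"
proof -
  assume c: "cup w i j"
  have ij: "i < j" using cup_letters[OF c] by auto
  have "even (S w i (Suc j) + int (Suc j - i))" using S_parity[of i "Suc j" w] ij by simp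
  then have "even (int (Suc j - i))" using cup_bal[OF c] by simp
  then show ?thesis using ij by (simp add: Suc_diff_le)
qed

definition P :: "weight \<Rightarrow> nat" where
  "P w = (\<Sum>i\<in>{i. i < length w \<and> w ! i = Down}. i)"

lemma set_snoc: "{j. j < length (w @ [y]) \<and> (w @ [y]) ! j = x} =
   {j. j < length w \<and> w ! j = x} \<union> (if y = x then {length w} else {})"
  by (auto simp: nth_append less_Suc_eq)

lemma count_card: "count_list w x = card {j. j < length w \<and> w ! j = x}"
proof (induction w rule: rev_induct)
  case Nil then show ?case by simp
next
  case (snoc y w)
  show ?case unfolding set_snoc using snoc by auto
qed

lemma height_snoc: "height (w @ [x]) = height w + (if x = Down then count_list w Up else 0)"
proof -
  have eq: "card {j. j < i \<and> (w @ [x]) ! j = Up} = card {j. j < i \<and> w ! j = Up}"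
    if "i < length w" for i
    using that by (intro arg_cong[where f=card]) (auto simp: nth_append)
  have h1: "(\<Sum>i\<in>{i. i < length w \<and> w ! i = Down}. card {j. j < i \<and> (w @ [x]) ! j = Up}) = height w"
    unfolding height_def by (rule sum.cong) (auto simp: eq)
  have cl: "card {j. j < length w \<and> (w @ [x]) ! j = Up} = count_list w Up"
    unfolding count_card by (intro arg_cong[where f=card]) (auto simp: nth_append)
  show ?thesis
  proof (cases "x = Down")
    case True
    have "height (w @ [x]) = (\<Sum>i\<in>{i. i < length w \<and> w ! i = Down} \<union> {length w}. card {j. j < i \<and> (w @ [x]) ! j = Up})"
      unfolding height_def set_snoc using True by simp
    also have "\<dots> = height w + count_list w Up"
      by (subst sum.union_disjoint) (auto simp: h1 cl)
    finally show ?thesis using True by simp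
  next
    case False
    have "height (w @ [x]) = (\<Sum>i\<in>{i. i < length w \<and> w ! i = Down}. card {j. j < i \<and> (w @ [x]) ! j = Up})"
      unfolding height_def set_snoc using False by simp
    then show ?thesis using h1 False by simp
  qed
qed

lemma count_len: "length w = count_list w Down + count_list w Up"
  by (induction w) (auto, metis letter.exhaust)

lemma height_formula: "height w + (\<Sum>k<count_list w Down. k) = P w"
proof (induction w rule: rev_induct)
  case Nil then show ?case by (simp add: height_def P_def)
next
  case (snoc x w)
  show ?case
  proof (cases "x = Down")
    case True
    have "P (w @ [x]) = P w + length w"
      unfolding P_def set_snoc using True by (subst sum.union_disjoint) auto
    then show ?thesis using snoc True height_snoc[of w x] count_len[of w] by simp
  next
    case False
    have "P (w @ [x]) = P w"
      unfolding P_def set_snoc using False by simp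
    then show ?thesis using snoc False height_snoc[of w x] by simp
  qed
qed

lemma P_swap:
  assumes "i < j" "j < length w" "w ! i = Down" "w ! j = Up"
  shows "P (w[i := Up, j := Down]) + i = P w + j"
proof -
  let ?A = "{q. q < length w \<and> w ! q = Down} - {i}"
  have fin: "finite ?A" by simp
  have e1: "{q. q < length w \<and> w ! q = Down} = insert i ?A" using assms by auto
  have e2: "{q. q < length (w[i := Up, j := Down]) \<and> w[i := Up, j := Down] ! q = Down} = insert j ?A"
    using assms by (auto simp: nth_list_update)
  have "P w = i + sum (\<lambda>q. q) ?A" unfolding P_def by (subst e1) (subst sum.insert, auto)
  moreover have "P (w[i := Up, j := Down]) = j + sum (\<lambda>q. q) ?A" unfolding P_def
    by (subst e2) (subst sum.insert, use assms in auto)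
  ultimately show ?thesis by simp
qed

lemma swap_parity:
  assumes "cup_swap w v" "count_list w Down = count_list v Down"
  shows "even (height w) \<longleftrightarrow> odd (height v)"
proof -
  obtain i j where c: "cup w i j" and v: "v = w[i := Up, j := Down]"
    using assms(1) unfolding cup_swap_def by blast
  have l: "w ! i = Down" "w ! j = Up" "i < j" "j < length w" using cup_letters[OF c] by auto
  have o: "odd (j - i)" using cup_odd[OF c] .
  have "height w + (\<Sum>k<count_list w Down. k) = P w" by (rule height_formula)
  moreover have "height v + (\<Sum>k<count_list w Down. k) = P v" using height_formula[of v] assms(2) by simp
  moreover have "P v + i = P w + j" using P_swap[OF l(3,4,1,2)] v by simp
  ultimately have "height v + i = height w + j" by simp
  then have "height v = height w + (j - i)" using l by simp
  then show ?thesis using o by auto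
qed

lemma edge_parity:
  "Gamma_edge m n w v \<Longrightarrow> (even (height w) \<longleftrightarrow> odd (height v))"
  unfolding Gamma_edge_def weights_def
  using swap_parity[of w v] swap_parity[of v w] by auto

lemma path_parity:
  "Gamma_path m n ps \<Longrightarrow> ((even (height (hd ps)) \<longleftrightarrow> even (height (last ps))) \<longleftrightarrow> even (length ps - 1))"
proof (induction ps)
  case Nil then show ?case by (simp add: Gamma_path_def)
next
  case (Cons x ps)
  show ?case
  proof (cases ps)
    case Nil then show ?thesis by simp
  next
    case (Cons y qs)
    have gp: "Gamma_path m n ps" unfolding Gamma_path_def
    proof (intro conjI allI impI)
      show "ps \<noteq> []" using Cons by simp
      show "set ps \<subseteq> weights m n" using Cons.prems unfolding Gamma_path_def by auto
      fix k assume "Suc k < length ps"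
      then have "Suc (Suc k) < length (x # ps)" by simp
      then have "Gamma_edge m n ((x # ps) ! Suc k) ((x # ps) ! Suc (Suc k))"
        using Cons.prems unfolding Gamma_path_def by blast
      then show "Gamma_edge m n (ps ! k) (ps ! Suc k)" by simp
    qed
    have "Gamma_edge m n x (hd ps)" using Cons.prems Cons unfolding Gamma_path_def by force
    then have "even (height x) \<longleftrightarrow> odd (height (hd ps))" by (rule edge_parity)
    then show ?thesis using Cons.IH[OF gp] Cons by auto
  qed
qed

theorem proposition2p6:
  fixes m n :: nat
  assumes "m \<ge> 1" and "n \<ge> 1"
  shows "(\<forall>w v. Gamma_edge m n w v \<longrightarrow> (even (height w) \<longleftrightarrow> odd (height v)))
    \<and> (\<forall>ps. Gamma_path m n ps \<longrightarrow>
          (even (length ps - 1) \<longrightarrow> (even (height (hd ps)) \<longleftrightarrow> even (height (last ps))))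
        \<and> (odd (length ps - 1) \<longrightarrow> (even (height (hd ps)) \<longleftrightarrow> odd (height (last ps)))))"
  using edge_parity path_parity by blast

end
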